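(* Let $(S, \cdot)$ be a semigroup, let $r$ be an idempotent in $J(S)$, and let $R: \mathcal{P}_f({}^{\mathbb{N}}S) \to r$ be a function. Then there exist a function $\mu: \mathcal{P}_f({}^{\mathbb{N}}S) \to \mathbb{N}$, $\alpha \in \times_{F \in \mathcal{P}_f({}^{\mathbb{N}}S)} S^{\mu(F) + 1}$ and $\tau \in \times_{F \in \mathcal{P}_f({}^{\mathbb{N}}S)} \mathcal{J}_{\mu(F)}$ such that (1) if $F, G \in \mathcal{P}_f({}^{\mathbb{N}}S)$ and $F \subsetneq G$, then $\tau(F)(\mu(F)) < \tau(G)(1)$; and (2) if $m \in \mathbb{N}$, $G_1, \ldots, G_m \in \mathcal{P}_f({}^{\mathbb{N}}S)$ with $G_1 \subsetneq \cdots \subsetneq G_m$, and $f_i \in G_i$ for each $i \in \{1, \ldots, m\}$, then $\prod_{i=1}^{m} x(\mu(G_i), \alpha(G_i), \tau(G_i), f_i) \in R(G_1)$ (product taken in increasing order of $i$).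
   Context: ${}^{\mathbb{N}}S$ is the set of all sequences $f:\mathbb{N}\to S$; $\mathcal{P}_f(X)$ is the set of nonempty finite subsets of $X$. For $k\in\mathbb{N}$, $\mathcal{J}_k=\{t\in\mathbb{N}^k: t(1)<t(2)<\cdots<t(k)\}$. For $k\in\mathbb{N}$, $a\in S^{k+1}$, $t\in\mathcal{J}_k$ and $f\in{}^{\mathbb{N}}S$, $x(k,a,t,f)=\big(\prod_{j=1}^k a(j)f(t(j))\big)a(k+1) = a(1)f(t(1))a(2)f(t(2))\cdots a(k)f(t(k))a(k+1)$. A set $A\subseteq S$ is a J-set if for every $F\in\mathcal{P}_f({}^{\mathbb{N}}S)$ there exist $k\in\mathbb{N}$, $a\in S^{k+1}$ and $t\in\mathcal{J}_k$ such that $x(k,a,t,f)\in A$ for all $f\in F$. $\beta S$ is the set of ultrafilters on $S$ with $p\cdot q = \{A\subseteq S: \{x : x^{-1}A\in q\}\in p\}$, $x^{-1}A=\{y: xy\in A\}$; $J(S)=\{p\in\beta S: \text{every member of } p \text{ is a J-set}\}$, and $r$ is idempotent if $r\cdot r=r$. *)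

theory Defs
  imports Main
begin

text \<open>The semigroup S is the universe of a type of class semigroup_mult.
  Sequences in S are functions nat => 'a (the domain N of sequences is relabelled as nat).
  Tuples a in S^(k+1) and t in J_k are functions indexed by 1..k+1 resp. 1..k.\<close>

definition Pf :: "'b set \<Rightarrow> bool" where
  "Pf X \<longleftrightarrow> finite X \<and> X \<noteq> {}"

definition Jk :: "nat \<Rightarrow> (nat \<Rightarrow> nat) \<Rightarrow> bool" where
  "Jk k t \<longleftrightarrow> (\<forall>i j. 1 \<le> i \<longrightarrow> i < j \<longrightarrow> j \<le> k \<longrightarrow> t i < t j)"

fun xw :: "nat \<Rightarrow> (nat \<Rightarrow> 'a::semigroup_mult) \<Rightarrow> (nat \<Rightarrow> nat) \<Rightarrow> (nat \<Rightarrow> 'a) \<Rightarrow> 'a" where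
  "xw 0 a t f = a 1"
| "xw (Suc k) a t f = xw k a t f * f (t (Suc k)) * a (Suc (Suc k))"

definition Jset :: "'a::semigroup_mult set \<Rightarrow> bool" where
  "Jset A \<longleftrightarrow> (\<forall>F :: (nat \<Rightarrow> 'a) set. Pf F \<longrightarrow>
     (\<exists>k a t. k \<ge> 1 \<and> Jk k t \<and> (\<forall>f\<in>F. xw k a t f \<in> A)))"

definition ultrafilter_on :: "'a set set \<Rightarrow> bool" where
  "ultrafilter_on p \<longleftrightarrow> UNIV \<in> p \<and> {} \<notin> p
     \<and> (\<forall>A B. A \<in> p \<longrightarrow> A \<subseteq> B \<longrightarrow> B \<in> p)
     \<and> (\<forall>A B. A \<in> p \<longrightarrow> B \<in> p \<longrightarrow> A \<inter> B \<in> p)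
     \<and> (\<forall>A. A \<in> p \<or> - A \<in> p)"

definition betaS :: "'a set set set" where
  "betaS = {p. ultrafilter_on p}"

definition umult :: "'a::semigroup_mult set set \<Rightarrow> 'a set set \<Rightarrow> 'a set set" where
  "umult p q = {A. {x. {y. x * y \<in> A} \<in> q} \<in> p}"

definition JS :: "'a::semigroup_mult set set set" where
  "JS = {p \<in> betaS. \<forall>A\<in>p. Jset A}"

fun ordprod :: "(nat \<Rightarrow> 'a::semigroup_mult) \<Rightarrow> nat \<Rightarrow> 'a" where
  "ordprod g 0 = undefined"
| "ordprod g (Suc 0) = g 1"
| "ordprod g (Suc (Suc n)) = ordprod g (Suc n) * g (Suc (Suc n))"

end

theory Submission imports Defs begin

definition star :: "'a set set \<Rightarrow> 'a::semigroup_mult set \<Rightarrow> 'a set" where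
  "star r A = {x\<in>A. {y. x*y\<in>A} \<in> r}"

type_synonym 'a dat = "(nat \<times> (nat\<Rightarrow>'a) \<times> (nat\<Rightarrow>nat)) \<times> 'a set"

definition muof :: "'a dat \<Rightarrow> nat" where "muof d = fst (fst d)"
definition alof :: "'a dat \<Rightarrow> nat \<Rightarrow> 'a" where "alof d = fst (snd (fst d))"
definition tauof :: "'a dat \<Rightarrow> nat \<Rightarrow> nat" where "tauof d = snd (snd (fst d))"
definition Cof :: "'a dat \<Rightarrow> 'a set" where "Cof d = snd d"

definition Dset :: "'a set set \<Rightarrow> ((nat\<Rightarrow>'a) set \<Rightarrow> 'a set) \<Rightarrow> ((nat\<Rightarrow>'a) set \<Rightarrow> 'a::semigroup_mult dat) \<Rightarrow> (nat\<Rightarrow>'a) set \<Rightarrow> 'a set" where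
  "Dset r R h G = star r (R G) \<inter> \<Inter> ((\<lambda>F. star r (Cof (h F))) ` {F. F \<subset> G \<and> F \<noteq> {}})"

definition Nb :: "((nat\<Rightarrow>'a) set \<Rightarrow> 'a dat) \<Rightarrow> (nat\<Rightarrow>'a) set \<Rightarrow> nat" where
  "Nb h G = (\<Sum>F\<in>{F. F \<subset> G}. tauof (h F) (muof (h F)))"

definition choice :: "'a set set \<Rightarrow> ((nat\<Rightarrow>'a) set \<Rightarrow> 'a set) \<Rightarrow> ((nat\<Rightarrow>'a) set \<Rightarrow> 'a::semigroup_mult dat) \<Rightarrow> (nat\<Rightarrow>'a) set \<Rightarrow> nat \<times> (nat\<Rightarrow>'a) \<times> (nat\<Rightarrow>nat)" where
  "choice r R h G = (SOME (k,a,t). 1 \<le> k \<and> Jk k t \<and> Nb h G < t 1 \<and> (\<forall>f\<in>G. xw k a t f \<in> Dset r R h G))"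

definition Cset :: "((nat\<Rightarrow>'a) set \<Rightarrow> 'a set) \<Rightarrow> ((nat\<Rightarrow>'a) set \<Rightarrow> 'a::semigroup_mult dat) \<Rightarrow> (nat\<Rightarrow>'a) set \<Rightarrow> nat \<times> (nat\<Rightarrow>'a) \<times> (nat\<Rightarrow>nat) \<Rightarrow> 'a set" where
  "Cset R h G kat = \<Inter> ((\<lambda>f. {y. xw (fst kat) (fst (snd kat)) (snd (snd kat)) f * y \<in> R G} \<inter>
      \<Inter> ((\<lambda>F. {y. xw (fst kat) (fst (snd kat)) (snd (snd kat)) f * y \<in> Cof (h F)}) ` {F. F \<subset> G \<and> F \<noteq> {}})) ` G)"

definition step where
  "step r R h G = (let kat = choice r R h G in (kat, Cset R h G kat))"

definition Phi where "Phi r R = wfrec finite_psubset (step r R)"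

lemma step_cong:
  assumes "\<And>F. F \<subset> G \<Longrightarrow> h F = h' F"
  shows "step r R h G = step r R h' G"
proof -
  have "Dset r R h G = Dset r R h' G" unfolding Dset_def using assms by auto
  moreover have "Nb h G = Nb h' G" unfolding Nb_def using assms by (intro sum.cong) auto
  moreover have "Cset R h G kat = Cset R h' G kat" for kat unfolding Cset_def using assms by auto
  ultimately show ?thesis unfolding step_def choice_def by simp
qed

lemma Phi_eq: "finite G \<Longrightarrow> Phi r R G = step r R (Phi r R) G"
proof -
  assume "finite G"
  have "Phi r R G = step r R (cut (Phi r R) finite_psubset G) G"
    unfolding Phi_def by (rule wfrec) simp
  also have "\<dots> = step r R (Phi r R) G"
    by (rule step_cong) (use \<open>finite G\<close> in \<open>simp add: cut_apply finite_psubset_def\<close>)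
  finally show ?thesis .
qed

lemma uf:
  assumes "r \<in> betaS"
  shows "UNIV \<in> r" "\<And>A B. A \<in> r \<Longrightarrow> A \<subseteq> B \<Longrightarrow> B \<in> r" "\<And>A B. A \<in> r \<Longrightarrow> B \<in> r \<Longrightarrow> A \<inter> B \<in> r"
  using assms unfolding betaS_def ultrafilter_on_def by blast+

lemma fin_inter:
  assumes "r \<in> betaS" "finite S" "\<And>x. x \<in> S \<Longrightarrow> A x \<in> r"
  shows "\<Inter> (A ` S) \<in> r"
  using assms(2,3)
proof (induction S rule: finite_induct)
  case empty then show ?case using uf(1)[OF assms(1)] by simp
next
  case (insert x S) then show ?case using uf(3)[OF assms(1)] by simp
qed

lemma star_in:
  assumes "r \<in> betaS" "umult r r = r" "A \<in> r"
  shows "star r A \<in> r"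
proof -
  have "A \<in> umult r r" using assms by simp
  hence "{x. {y. x*y\<in>A} \<in> r} \<in> r" unfolding umult_def by simp
  moreover have "star r A = A \<inter> {x. {y. x*y\<in>A} \<in> r}" unfolding star_def by auto
  ultimately show ?thesis using uf(3)[OF assms(1)] assms(3) by simp
qed

lemma xw_shift: "xw k a t (\<lambda>n. f (n + c)) = xw k a (\<lambda>i. t i + c) f"
  by (induction k) auto

lemma Jset_shift:
  assumes "Jset A" "Pf F"
  shows "\<exists>k a t. 1 \<le> k \<and> Jk k t \<and> N < t 1 \<and> (\<forall>f\<in>F. xw k a t f \<in> A)"
proof -
  let ?F = "(\<lambda>f n. f (n + Suc N)) ` F"
  have "Pf ?F" using assms(2) unfolding Pf_def by auto
  then obtain k a t where "k \<ge> 1" "Jk k t" "\<forall>f\<in>?F. xw k a t f \<in> A"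
    using assms(1) unfolding Jset_def by blast
  have "\<forall>f\<in>F. xw k a (\<lambda>i. t i + Suc N) f \<in> A"
  proof
    fix f assume "f \<in> F"
    hence "xw k a t (\<lambda>n. f (n + Suc N)) \<in> A" using \<open>\<forall>f\<in>?F. xw k a t f \<in> A\<close> by blast
    thus "xw k a (\<lambda>i. t i + Suc N) f \<in> A" by (simp only: xw_shift)
  qed
  moreover have "Jk k (\<lambda>i. t i + Suc N)" using \<open>Jk k t\<close> unfolding Jk_def by auto
  ultimately show ?thesis using \<open>k \<ge> 1\<close> by fastforce
qed

lemma inv:
  fixes r :: "'a::semigroup_mult set set"
  assumes r: "r \<in> JS" and idem: "umult r r = r" and RR: "\<forall>F. Pf F \<longrightarrow> R F \<in> r"
    and fin: "finite G"
  shows "G \<noteq> {} \<longrightarrow> 1 \<le> muof (Phi r R G) \<and> Jk (muof (Phi r R G)) (tauof (Phi r R G))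
     \<and> Nb (Phi r R) G < tauof (Phi r R G) 1
     \<and> (\<forall>f\<in>G. xw (muof (Phi r R G)) (alof (Phi r R G)) (tauof (Phi r R G)) f \<in> Dset r R (Phi r R) G)
     \<and> Cof (Phi r R G) \<in> r"
  using fin
proof (induction G rule: finite_psubset_induct)
  case (psubset G)
  let ?P = "Phi r R"
  have b: "r \<in> betaS" using r unfolding JS_def by simp
  show ?case
  proof
    assume ne: "G \<noteq> {}"
    have PfG: "Pf G" using ne psubset(1) unfolding Pf_def by simp
    have finS: "finite {F. F \<subset> G \<and> F \<noteq> {}}" by (rule finite_subset[of _ "Pow G"]) (use psubset(1) in auto)
    have D: "Dset r R ?P G \<in> r"
      unfolding Dset_def
    proof (rule uf(3)[OF b])
      show "star r (R G) \<in> r" using star_in[OF b idem] RR PfG by blast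
      show "\<Inter> ((\<lambda>F. star r (Cof (?P F))) ` {F. F \<subset> G \<and> F \<noteq> {}}) \<in> r"
        by (rule fin_inter[OF b finS]) (use psubset(2) star_in[OF b idem] in blast)
    qed
    hence "Jset (Dset r R ?P G)" using r unfolding JS_def by blast
    then obtain k a t where kat: "1 \<le> k" "Jk k t" "Nb ?P G < t 1" "\<forall>f\<in>G. xw k a t f \<in> Dset r R ?P G"
      using Jset_shift[OF _ PfG] by blast
    let ?Q = "\<lambda>(k,a,t). 1 \<le> k \<and> Jk k t \<and> Nb ?P G < t 1 \<and> (\<forall>f\<in>G. xw k a t f \<in> Dset r R ?P G)"
    have "?Q (k,a,t)" using kat by simp
    hence Qc: "?Q (choice r R ?P G)" unfolding choice_def by (rule someI)
    have PG: "?P G = (choice r R ?P G, Cset R ?P G (choice r R ?P G))"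
      using Phi_eq[OF psubset(1)] unfolding step_def Let_def by simp
    obtain k' a' t' where ch: "choice r R ?P G = (k',a',t')" by (metis prod.exhaust)
    have fields: "muof (?P G) = k'" "alof (?P G) = a'" "tauof (?P G) = t'" "Cof (?P G) = Cset R ?P G (k',a',t')"
      using PG ch unfolding muof_def alof_def tauof_def Cof_def by simp_all
    have Q': "1 \<le> k'" "Jk k' t'" "Nb ?P G < t' 1" "\<forall>f\<in>G. xw k' a' t' f \<in> Dset r R ?P G"
      using Qc ch by simp_all
    have "Cset R ?P G (k',a',t') \<in> r"
      unfolding Cset_def fst_conv snd_conv
    proof (rule fin_inter[OF b psubset(1)])
      fix f assume "f \<in> G"
      hence xD: "xw k' a' t' f \<in> Dset r R ?P G" using Q' by blast
      show "{y. xw k' a' t' f * y \<in> R G} \<inter>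
        \<Inter> ((\<lambda>F. {y. xw k' a' t' f * y \<in> Cof (?P F)}) ` {F. F \<subset> G \<and> F \<noteq> {}}) \<in> r"
      proof (rule uf(3)[OF b])
        show "{y. xw k' a' t' f * y \<in> R G} \<in> r" using xD unfolding Dset_def star_def by blast
        show "\<Inter> ((\<lambda>F. {y. xw k' a' t' f * y \<in> Cof (?P F)}) ` {F. F \<subset> G \<and> F \<noteq> {}}) \<in> r"
          by (rule fin_inter[OF b finS]) (use xD in \<open>auto simp: Dset_def star_def\<close>)
      qed
    qed
    thus "1 \<le> muof (?P G) \<and> Jk (muof (?P G)) (tauof (?P G))
     \<and> Nb ?P G < tauof (?P G) 1
     \<and> (\<forall>f\<in>G. xw (muof (?P G)) (alof (?P G)) (tauof (?P G)) f \<in> Dset r R ?P G)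
     \<and> Cof (?P G) \<in> r"
      using Q' fields by simp
  qed
qed

lemma Cof_eq: "finite G \<Longrightarrow> Cof (Phi r R G) = Cset R (Phi r R) G (muof (Phi r R G), alof (Phi r R G), tauof (Phi r R G))"
  using Phi_eq[of G r R] unfolding step_def Let_def Cof_def muof_def alof_def tauof_def by simp

lemma facts:
  fixes r :: "'a::semigroup_mult set set"
  assumes r: "r \<in> JS" and idem: "umult r r = r" and RR: "\<forall>F. Pf F \<longrightarrow> R F \<in> r"
    and G: "Pf G" and f: "f \<in> G"
  defines "x \<equiv> xw (muof (Phi r R G)) (alof (Phi r R G)) (tauof (Phi r R G)) f"
  shows "x \<in> R G" "Cof (Phi r R G) \<subseteq> {y. x*y \<in> R G}"
    "\<And>F. F \<subset> G \<Longrightarrow> F \<noteq> {} \<Longrightarrow> x \<in> Cof (Phi r R F)"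
    "\<And>F. F \<subset> G \<Longrightarrow> F \<noteq> {} \<Longrightarrow> Cof (Phi r R G) \<subseteq> {y. x*y \<in> Cof (Phi r R F)}"
proof -
  have fin: "finite G" "G \<noteq> {}" using G unfolding Pf_def by auto
  have xD: "x \<in> Dset r R (Phi r R) G" using inv[OF r idem RR fin(1)] fin f unfolding x_def by blast
  show "x \<in> R G" using xD unfolding Dset_def star_def by blast
  show "\<And>F. F \<subset> G \<Longrightarrow> F \<noteq> {} \<Longrightarrow> x \<in> Cof (Phi r R F)" using xD unfolding Dset_def star_def by blast
  show "Cof (Phi r R G) \<subseteq> {y. x*y \<in> R G}" unfolding Cof_eq[OF fin(1)] Cset_def x_def using f by auto
  show "\<And>F. F \<subset> G \<Longrightarrow> F \<noteq> {} \<Longrightarrow> Cof (Phi r R G) \<subseteq> {y. x*y \<in> Cof (Phi r R F)}"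
    unfolding Cof_eq[OF fin(1)] Cset_def x_def using f by auto
qed

lemma chain:
  fixes r :: "'a::semigroup_mult set set"
  assumes r: "r \<in> JS" and idem: "umult r r = r" and RR: "\<forall>F. Pf F \<longrightarrow> R F \<in> r"
  shows "(\<forall>i\<in>{1..Suc n}. Pf (G i)) \<longrightarrow>
        (\<forall>i. 1 \<le> i \<longrightarrow> i < Suc n \<longrightarrow> G i \<subset> G (Suc i)) \<longrightarrow>
        (\<forall>i\<in>{1..Suc n}. f i \<in> G i) \<longrightarrow>
        ordprod (\<lambda>i. xw (muof (Phi r R (G i))) (alof (Phi r R (G i))) (tauof (Phi r R (G i))) (f i)) (Suc n) \<in> R (G 1)
        \<and> Cof (Phi r R (G (Suc n))) \<subseteq> {z. ordprod (\<lambda>i. xw (muof (Phi r R (G i))) (alof (Phi r R (G i))) (tauof (Phi r R (G i))) (f i)) (Suc n) * z \<in> R (G 1)}"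
proof (induction n)
  case 0
  show ?case using facts(1,2)[OF r idem RR, of "G 1" "f 1"] by auto
next
  case (Suc n)
  let ?g = "\<lambda>i. xw (muof (Phi r R (G i))) (alof (Phi r R (G i))) (tauof (Phi r R (G i))) (f i)"
  show ?case
  proof (intro impI)
    assume A: "\<forall>i\<in>{1..Suc (Suc n)}. Pf (G i)" "\<forall>i. 1 \<le> i \<longrightarrow> i < Suc (Suc n) \<longrightarrow> G i \<subset> G (Suc i)"
      "\<forall>i\<in>{1..Suc (Suc n)}. f i \<in> G i"
    have IH: "ordprod ?g (Suc n) \<in> R (G 1) \<and> Cof (Phi r R (G (Suc n))) \<subseteq> {z. ordprod ?g (Suc n) * z \<in> R (G 1)}"
      using Suc A by auto
    have P2: "Pf (G (Suc (Suc n)))" "f (Suc (Suc n)) \<in> G (Suc (Suc n))" using A by auto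
    have sub: "G (Suc n) \<subset> G (Suc (Suc n))" using A(2) by auto
    have ne: "G (Suc n) \<noteq> {}" using A(1) unfolding Pf_def by auto
    have x1: "?g (Suc (Suc n)) \<in> Cof (Phi r R (G (Suc n)))"
      using facts(3)[OF r idem RR P2 sub ne] by simp
    have x2: "Cof (Phi r R (G (Suc (Suc n)))) \<subseteq> {y. ?g (Suc (Suc n)) * y \<in> Cof (Phi r R (G (Suc n)))}"
      using facts(4)[OF r idem RR P2 sub ne] by simp
    show "ordprod ?g (Suc (Suc n)) \<in> R (G 1) \<and> Cof (Phi r R (G (Suc (Suc n)))) \<subseteq> {z. ordprod ?g (Suc (Suc n)) * z \<in> R (G 1)}"
      using IH x1 x2 by (auto simp: mult.assoc)
  qed
qed

theorem theorem3p2: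
  fixes r :: "'a::semigroup_mult set set"
    and R :: "(nat \<Rightarrow> 'a) set \<Rightarrow> 'a set"
  assumes "r \<in> JS" and "umult r r = r"
    and "\<forall>F. Pf F \<longrightarrow> R F \<in> r"
  shows "\<exists>(\<mu> :: (nat \<Rightarrow> 'a) set \<Rightarrow> nat) (\<alpha> :: (nat \<Rightarrow> 'a) set \<Rightarrow> nat \<Rightarrow> 'a)
            (\<tau> :: (nat \<Rightarrow> 'a) set \<Rightarrow> nat \<Rightarrow> nat).
     (\<forall>F. Pf F \<longrightarrow> \<mu> F \<ge> 1 \<and> Jk (\<mu> F) (\<tau> F))
   \<and> (\<forall>F G. Pf F \<longrightarrow> Pf G \<longrightarrow> F \<subset> G \<longrightarrow> \<tau> F (\<mu> F) < \<tau> G 1)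
   \<and> (\<forall>(m::nat) (G :: nat \<Rightarrow> (nat \<Rightarrow> 'a) set) (f :: nat \<Rightarrow> nat \<Rightarrow> 'a).
        m \<ge> 1 \<longrightarrow> (\<forall>i\<in>{1..m}. Pf (G i)) \<longrightarrow>
        (\<forall>i. 1 \<le> i \<longrightarrow> i < m \<longrightarrow> G i \<subset> G (Suc i)) \<longrightarrow>
        (\<forall>i\<in>{1..m}. f i \<in> G i) \<longrightarrow>
        ordprod (\<lambda>i. xw (\<mu> (G i)) (\<alpha> (G i)) (\<tau> (G i)) (f i)) m \<in> R (G 1))"
proof (rule exI[where x="\<lambda>G. muof (Phi r R G)"], rule exI[where x="\<lambda>G. alof (Phi r R G)"],
    rule exI[where x="\<lambda>G. tauof (Phi r R G)"], intro conjI allI impI)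
  let ?P = "Phi r R"
  fix F :: "(nat \<Rightarrow> 'a) set" assume "Pf F"
  hence fin: "finite F" "F \<noteq> {}" unfolding Pf_def by auto
  show "1 \<le> muof (?P F)" "Jk (muof (?P F)) (tauof (?P F))" using inv[OF assms fin(1)] fin by auto
next
  let ?P = "Phi r R"
  fix F G :: "(nat \<Rightarrow> 'a) set" assume F: "Pf F" and G: "Pf G" and FG: "F \<subset> G"
  have fin: "finite G" "G \<noteq> {}" using G unfolding Pf_def by auto
  have finS: "finite {F. F \<subset> G}" by (rule finite_subset[of _ "Pow G"]) (use fin in auto)
  have "tauof (?P F) (muof (?P F)) \<le> Nb ?P G"
    unfolding Nb_def by (rule member_le_sum[OF _ _ finS]) (use FG in auto)
  also have "\<dots> < tauof (?P G) 1" using inv[OF assms fin(1)] fin by auto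
  finally show "tauof (?P F) (muof (?P F)) < tauof (?P G) 1" .
next
  fix m :: nat and G :: "nat \<Rightarrow> (nat \<Rightarrow> 'a) set" and f :: "nat \<Rightarrow> nat \<Rightarrow> 'a"
  assume "1 \<le> m" "\<forall>i\<in>{1..m}. Pf (G i)" "\<forall>i. 1 \<le> i \<longrightarrow> i < m \<longrightarrow> G i \<subset> G (Suc i)" "\<forall>i\<in>{1..m}. f i \<in> G i"
  then obtain n where "m = Suc n" by (cases m) auto
  thus "ordprod (\<lambda>i. xw (muof (Phi r R (G i))) (alof (Phi r R (G i))) (tauof (Phi r R (G i))) (f i)) m \<in> R (G 1)"
    using chain[OF assms, of n G f] \<open>\<forall>i\<in>{1..m}. Pf (G i)\<close> \<open>\<forall>i. 1 \<le> i \<longrightarrow> i < m \<longrightarrow> G i \<subset> G (Suc i)\<close>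
      \<open>\<forall>i\<in>{1..m}. f i \<in> G i\<close> by blast
qed

end
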